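(* Let $t$ and $i$ be integers with $t \geq 1$, $0 \leq i < t$ and $t > 16i^{2} - i$. Let $H$ be a Hadamard matrix of order $4t+4i$, and let $M$ be the $(4t+4i) \times 4t$ matrix obtained from $H$ by deleting any $4i$ of its columns. Let $r_1, \dots, r_{4t+4i}$ be the rows of $M$, put $r_{4t+4i+j} = -r_j$ for $1 \leq j \leq 4t+4i$, and let $C_M = \{ \tfrac{1}{2}(r_j + \underline{1}) : 1 \leq j \leq 8t+8i\} \subseteq \{0,1\}^{4t}$, where $\underline{1}$ is the all-ones vector of length $4t$. Then the binary code $C_M$ is maximal: for every $v \in \{0,1\}^{4t} \setminus C_M$, the code $C_M \cup \{v\}$ has strictly smaller minimum distance than $C_M$.
   Context: A Hadamard matrix of order $n$ is an $n \times n$ matrix $H$ with entries in $\{\pm 1\}$ satisfying $HH^{\top} = nI_n$. A binary code of length $m$ is a subset of $\{0,1\}^m$; its minimum distance is the minimum Hamming distance between two distinct codewords. A code is called maximal if including any additional word as a codeword necessarily decreases the minimum distance. *)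

theory Defs
  imports Main
begin

(* An n x n matrix is represented as a function nat => nat => int, indices < n. *)
definition hadamard :: "nat \<Rightarrow> (nat \<Rightarrow> nat \<Rightarrow> int) \<Rightarrow> bool" where
  "hadamard n H \<longleftrightarrow>
     (\<forall>a<n. \<forall>b<n. H a b = 1 \<or> H a b = -1) \<and>
     (\<forall>a<n. \<forall>b<n. (\<Sum>k<n. H a k * H b k) = (if a = b then int n else 0))"

definition binwords :: "nat \<Rightarrow> nat list set" where
  "binwords m = {w. length w = m \<and> set w \<subseteq> {0, 1}}"

definition hamming :: "nat list \<Rightarrow> nat list \<Rightarrow> nat" where
  "hamming x y = card {k. k < length x \<and> x ! k \<noteq> y ! k}"

definition min_dist :: "nat list set \<Rightarrow> nat" where
  "min_dist C = Min {hamming x y | x y. x \<in> C \<and> y \<in> C \<and> x \<noteq> y}"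

(* Code C_M: M has rows r_j (j < n), entries M j k = H j (c k) for k < m.
   Codewords (r + 1)/2 for rows r_j and -r_j. *)
definition code_of :: "nat \<Rightarrow> nat \<Rightarrow> (nat \<Rightarrow> nat \<Rightarrow> int) \<Rightarrow> (nat \<Rightarrow> nat) \<Rightarrow> nat list set" where
  "code_of n m H c =
     {map (\<lambda>k. nat ((s * H j (c k) + 1) div 2)) [0..<m] | j s. j < n \<and> s \<in> {1, -1}}"

end

theory Submission imports Defs "Jordan_Normal_Form.Determinant" begin

lemma col_orth:
  assumes "hadamard N H" "a < N" "b < N"
  shows "(\<Sum>j<N. H j a * H j b) = (if a = b then int N else 0)"
proof -
  have N0: "N > 0" using assms by auto
  define A :: "rat mat" where "A = mat N N (\<lambda>(p,q). of_int (H p q))"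
  define B :: "rat mat" where "B = mat N N (\<lambda>(p,q). of_int (H q p) / of_nat N)"
  have AB: "A * B = 1\<^sub>m N"
  proof (rule eq_matI)
    fix p q assume pq: "p < dim_row (1\<^sub>m N :: rat mat)" "q < dim_col (1\<^sub>m N :: rat mat)"
    hence pq': "p < N" "q < N" by auto
    have "(A * B) $$ (p,q) = (\<Sum>k<N. of_int (H p k) * (of_int (H q k) / of_nat N))"
      using pq' unfolding A_def B_def by (simp add: scalar_prod_def lessThan_atLeast0)
    also have "\<dots> = of_int (\<Sum>k<N. H p k * H q k) / of_nat N"
      by (simp add: sum_divide_distrib)
    also have "\<dots> = (if p = q then 1 else 0)"
      using assms(1) pq' N0 unfolding hadamard_def by auto
    finally show "(A * B) $$ (p,q) = 1\<^sub>m N $$ (p,q)" using pq' by simp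
  qed (auto simp: A_def B_def)
  have BA: "B * A = 1\<^sub>m N"
    by (rule mat_mult_left_right_inverse[OF _ _ AB]) (auto simp: A_def B_def)
  have "(B * A) $$ (a,b) = (\<Sum>k<N. (of_int (H k a) / of_nat N) * of_int (H k b))"
    using assms unfolding A_def B_def by (simp add: scalar_prod_def lessThan_atLeast0)
  also have "\<dots> = of_int (\<Sum>k<N. H k a * H k b) / of_nat N"
    by (simp add: sum_divide_distrib)
  finally have "of_int (\<Sum>k<N. H k a * H k b) / (of_nat N :: rat) = (if a = b then 1 else 0)"
    using BA assms by simp
  then have "(of_int (\<Sum>k<N. H k a * H k b) :: rat) = of_int (if a = b then int N else 0)"
    using N0 by (simp add: divide_eq_eq split: if_splits del: of_int_sum)
  then show ?thesis by (simp only: of_int_eq_iff)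
qed

definition wd :: "nat \<Rightarrow> (nat \<Rightarrow> int) \<Rightarrow> nat list" where
  "wd m a = map (\<lambda>k. nat ((a k + 1) div 2)) [0..<m]"

lemma ham:
  assumes "\<forall>k<m. a k = 1 \<or> a k = -1" "\<forall>k<m. b k = 1 \<or> b k = -1"
  shows "2 * int (hamming (wd m a) (wd m b)) = int m - (\<Sum>k<m. a k * b k)"
proof -
  have "hamming (wd m a) (wd m b) = card {k. k < m \<and> a k \<noteq> b k}"
    unfolding hamming_def wd_def
  proof (rule arg_cong[where f=card], rule Collect_cong)
    fix k
    show "(k < length (map (\<lambda>k. nat ((a k + 1) div 2)) [0..<m]) \<and>
         map (\<lambda>k. nat ((a k + 1) div 2)) [0..<m] ! k \<noteq>
         map (\<lambda>k. nat ((b k + 1) div 2)) [0..<m] ! k) = (k < m \<and> a k \<noteq> b k)"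
    proof (cases "k < m")
      case True
      then show ?thesis using assms(1)[rule_format, OF True] assms(2)[rule_format, OF True]
        by auto
    qed simp
  qed
  moreover have "(\<Sum>k<m. a k * b k) = (\<Sum>k<m. 1 - 2 * (if a k \<noteq> b k then 1 else 0))"
    apply (rule sum.cong) using assms by fastforce+
  moreover have "(\<Sum>k<m. (if a k \<noteq> b k then 1 else 0::int)) = int (card {k. k < m \<and> a k \<noteq> b k})"
    by (simp add: sum.If_cases lessThan_def Collect_conj_eq Int_commute)
  ultimately show ?thesis by (simp add: sum_subtractf sum_distrib_left[symmetric])
qed

lemma ham_self: "hamming x x = 0"
  unfolding hamming_def by simp


lemma inner_bound:
  assumes H: "hadamard N H" and j: "j < N" "j' < N" "j \<noteq> j'"
    and inj: "inj_on c {..<m}" and cr: "\<forall>k<m. c k < N"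
  shows "\<bar>\<Sum>k<m. H j (c k) * H j' (c k)\<bar> \<le> int N - int m"
proof -
  let ?f = "\<lambda>b. H j b * H j' b"
  let ?S = "c ` {..<m}"
  have sub: "?S \<subseteq> {..<N}" using cr by auto
  have cS: "card ?S = m" using inj by (simp add: card_image)
  have r: "(\<Sum>k<m. H j (c k) * H j' (c k)) = sum ?f ?S"
    using inj by (simp add: sum.reindex)
  have "sum ?f {..<N} = 0" using H j unfolding hadamard_def by auto
  moreover have "sum ?f {..<N} = sum ?f ?S + sum ?f ({..<N} - ?S)"
    using sum.subset_diff[OF sub finite_lessThan, of ?f] by simp
  ultimately have e: "sum ?f ?S = - sum ?f ({..<N} - ?S)" by simp
  have "\<bar>sum ?f ({..<N} - ?S)\<bar> \<le> (\<Sum>b\<in>{..<N} - ?S. \<bar>?f b\<bar>)" by (rule sum_abs)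
  also have "\<dots> = (\<Sum>b\<in>{..<N} - ?S. 1)"
  proof (rule sum.cong)
    fix b assume "b \<in> {..<N} - ?S"
    hence b: "b < N" by simp
    have "H j b = 1 \<or> H j b = -1" "H j' b = 1 \<or> H j' b = -1"
      using H j b unfolding hadamard_def by auto
    then show "\<bar>?f b\<bar> = 1" by (elim disjE) simp_all
  qed simp
  also have "\<dots> = int (card ({..<N} - ?S))" by simp
  also have "\<dots> = int N - int m"
  proof -
    have "m \<le> N" using card_mono[OF finite_lessThan sub] cS by simp
    then show ?thesis using sub cS by (simp add: card_Diff_subset of_nat_diff)
  qed
  finally show ?thesis using r e by simp
qed


lemma sumsq:
  assumes H: "hadamard N H" and inj: "inj_on c {..<m}" and cr: "\<forall>k<m. c k < N"
    and x: "\<forall>k<m. x k = 1 \<or> x k = -1"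
  shows "(\<Sum>j<N. (\<Sum>k<m. x k * H j (c k))^2) = int N * int m"
proof -
  have "(\<Sum>j<N. (\<Sum>k<m. x k * H j (c k))^2) =
        (\<Sum>j<N. \<Sum>k<m. \<Sum>k'<m. x k * x k' * (H j (c k) * H j (c k')))"
    by (simp add: power2_eq_square sum_product mult_ac)
  also have "\<dots> = (\<Sum>k<m. \<Sum>k'<m. x k * x k' * (\<Sum>j<N. H j (c k) * H j (c k')))"
  proof -
    have "(\<Sum>j<N. \<Sum>k<m. \<Sum>k'<m. x k * x k' * (H j (c k) * H j (c k'))) =
          (\<Sum>k<m. \<Sum>j<N. \<Sum>k'<m. x k * x k' * (H j (c k) * H j (c k')))"
      by (rule sum.swap)
    also have "\<dots> = (\<Sum>k<m. \<Sum>k'<m. \<Sum>j<N. x k * x k' * (H j (c k) * H j (c k')))"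
      by (rule sum.cong[OF refl], rule sum.swap)
    finally show ?thesis by (simp only: sum_distrib_left)
  qed
  also have "\<dots> = (\<Sum>k<m. \<Sum>k'<m. x k * x k' * (if k = k' then int N else 0))"
    apply (intro sum.cong refl)
    using col_orth[OF H] cr inj by (simp add: inj_on_def)
  also have "\<dots> = (\<Sum>k<m. int N)"
  proof (rule sum.cong[OF refl])
    fix k assume k: "k \<in> {..<m}"
    have "(\<Sum>k'<m. x k * x k' * (if k = k' then int N else 0)) = x k * x k * int N"
      using k by (simp add: if_distrib sum.delta cong: if_cong)
    also have "\<dots> = int N" using x k by auto
    finally show "(\<Sum>k'<m. x k * x k' * (if k = k' then int N else 0)) = int N" .
  qed
  finally show ?thesis by simp
qed


lemma code_eq: "code_of n m H c = {wd m (\<lambda>k. s * H j (c k)) | j s. j < n \<and> s \<in> {1, -1}}"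
  unfolding code_of_def wd_def by simp

lemma sum_scale: "(\<Sum>k<m. s * a k * (s' * b k)) = s * s' * (\<Sum>k<m. a k * (b k::int))"
  by (simp add: sum_distrib_left mult_ac)

lemma fin_dist: "finite X \<Longrightarrow> finite {hamming x y | x y. x \<in> X \<and> y \<in> X \<and> x \<noteq> y}"
  by (rule finite_subset[of _ "(\<lambda>(x,y). hamming x y) ` (X \<times> X)"]) auto

lemma main:
  assumes Hh: "hadamard N H" and inj: "inj_on c {..<m}" and cr: "\<forall>k<m. c k < N"
    and mN: "m \<le> N" and sq: "(N - m)^2 < m"
  shows "\<forall>v \<in> binwords m - code_of N m H c.
           min_dist (insert v (code_of N m H c)) < min_dist (code_of N m H c)"
proof
  define C where "C = code_of N m H c"
  define d where "d = N - m"
  have m0: "0 < m" using sq by (metis gr0I less_nat_zero_code)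
  have N0: "0 < N" using m0 mN by simp
  have pm: "\<And>j k. j < N \<Longrightarrow> k < m \<Longrightarrow> H j (c k) = 1 \<or> H j (c k) = -1"
    using Hh cr unfolding hadamard_def by auto
  have pms: "\<And>j s. j < N \<Longrightarrow> s \<in> {1,-1::int} \<Longrightarrow> \<forall>k<m. s * H j (c k) = 1 \<or> s * H j (c k) = -1"
  proof (intro allI impI)
    fix j s k assume a: "j < N" "s \<in> {1,-1::int}" "k < m"
    show "s * H j (c k) = 1 \<or> s * H j (c k) = -1" using pm[OF a(1,3)] a(2) by auto
  qed
  have Ceq: "C = {wd m (\<lambda>k. s * H j (c k)) | j s. j < N \<and> s \<in> {1, -1}}"
    unfolding C_def by (rule code_eq)
  have finC: "finite C"
    unfolding Ceq
    by (rule finite_subset[of _ "(\<lambda>(j,s). wd m (\<lambda>k. s * H j (c k))) ` ({..<N} \<times> {1,-1})"]) auto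
  have hamC: "2 * int (hamming (wd m (\<lambda>k. s * H j (c k))) (wd m (\<lambda>k. s' * H j' (c k))))
       = int m - s * s' * (\<Sum>k<m. H j (c k) * H j' (c k))"
    if "j < N" "j' < N" "s \<in> {1,-1}" "s' \<in> {1,-1}" for j j' s s'
    using ham[OF pms[OF that(1,3)] pms[OF that(2,4)]] by (simp add: sum_scale)
  have lb: "int m - int d \<le> 2 * int (hamming x y)" if xy: "x \<in> C" "y \<in> C" "x \<noteq> y" for x y
  proof -
    obtain j s where j: "j < N" "s \<in> {1,-1::int}" and x: "x = wd m (\<lambda>k. s * H j (c k))"
      using xy(1) Ceq by auto
    obtain j' s' where j': "j' < N" "s' \<in> {1,-1::int}" and y: "y = wd m (\<lambda>k. s' * H j' (c k))"
      using xy(2) Ceq by auto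
    show ?thesis
    proof (cases "j = j'")
      case True
      have "s \<noteq> s'" using xy(3) x y True by auto
      hence ss: "s * s' = -1" using j j' by auto
      have "(\<Sum>k<m. H j (c k) * H j' (c k)) = (\<Sum>k<m. 1)"
        apply (rule sum.cong[OF refl]) using pm[OF j(1)] True by fastforce
      then show ?thesis using hamC[OF j(1) j'(1) j(2) j'(2)] x y ss by simp
    next
      case False
      have b: "\<bar>\<Sum>k<m. H j (c k) * H j' (c k)\<bar> \<le> int d"
        using inner_bound[OF Hh j(1) j'(1) False inj cr] mN d_def by simp
      have "\<bar>s * s'\<bar> = 1" using j j' by auto
      hence "\<bar>s * s' * (\<Sum>k<m. H j (c k) * H j' (c k))\<bar> \<le> int d" using b by (simp add: abs_mult)
      then show ?thesis using hamC[OF j(1) j'(1) j(2) j'(2)] x y by simp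
    qed
  qed
  fix v assume v: "v \<in> binwords m - code_of N m H c"
  hence vC: "v \<notin> C" and vb: "v \<in> binwords m" using C_def by auto
  define x where "x k = 2 * int (v ! k) - 1" for k
  have v01: "\<And>k. k < m \<Longrightarrow> v ! k = 0 \<or> v ! k = 1"
    using vb unfolding binwords_def by (auto dest!: nth_mem)
  have xpm: "\<forall>k<m. x k = 1 \<or> x k = -1" using v01 x_def by fastforce
  have vx: "v = wd m x"
    unfolding wd_def
  proof (rule nth_equalityI)
    show "length v = length (map (\<lambda>k. nat ((x k + 1) div 2)) [0..<m])" using vb binwords_def by simp
    fix k assume "k < length v"
    hence k: "k < m" using vb binwords_def by simp
    show "v ! k = map (\<lambda>k. nat ((x k + 1) div 2)) [0..<m] ! k"
      using v01[OF k] k x_def by auto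
  qed
  define P where "P j = (\<Sum>k<m. x k * H j (c k))" for j
  have "(\<Sum>j<N. (P j)^2) = int N * int m"
    unfolding P_def by (rule sumsq[OF Hh inj cr xpm])
  then obtain j where j: "j < N" "int m \<le> (P j)^2"
  proof -
    assume r: "\<And>j. j < N \<Longrightarrow> int m \<le> (P j)^2 \<Longrightarrow> thesis"
    show thesis
    proof (rule ccontr)
      assume "\<not> thesis"
      hence "\<forall>j\<in>{..<N}. (P j)^2 < int m" using r by force
      hence "(\<Sum>j<N. (P j)^2) < (\<Sum>j<N. int m)"
        using N0 by (intro sum_strict_mono) auto
      thus False using \<open>(\<Sum>j<N. (P j)^2) = int N * int m\<close> by simp
    qed
  qed
  have Pd: "int d < \<bar>P j\<bar>"
  proof (rule ccontr)
    assume "\<not> int d < \<bar>P j\<bar>"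
    hence "\<bar>P j\<bar>^2 \<le> (int d)^2" by (intro power_mono) auto
    hence "(P j)^2 \<le> int (d^2)" by simp
    moreover have "int (d^2) < int m" using sq d_def by simp
    ultimately show False using j(2) by linarith
  qed
  define s :: int where "s = (if P j \<ge> 0 then 1 else -1)"
  have s: "s \<in> {1,-1}" "s * P j = \<bar>P j\<bar>" unfolding s_def by auto
  define w where "w = wd m (\<lambda>k. s * H j (c k))"
  have wC: "w \<in> C" unfolding Ceq w_def using j(1) s(1) by blast
  have "2 * int (hamming v w) = int m - (\<Sum>k<m. x k * (s * H j (c k)))"
    unfolding vx w_def by (rule ham[OF xpm pms[OF j(1) s(1)]])
  also have "(\<Sum>k<m. x k * (s * H j (c k))) = s * P j"
    unfolding P_def by (simp add: sum_distrib_left mult_ac)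
  finally have hvw: "2 * int (hamming v w) < int m - int d" using s(2) Pd by simp
  have vw: "v \<noteq> w" using wC vC by auto
  have "min_dist (insert v C) \<le> hamming v w"
    unfolding min_dist_def
  proof (rule Min_le)
    show "finite {hamming x y |x y. x \<in> insert v C \<and> y \<in> insert v C \<and> x \<noteq> y}"
      using finC by (intro fin_dist) simp
  qed (use vw wC in blast)
  also have "hamming v w < min_dist C"
    unfolding min_dist_def
  proof (subst Min_gr_iff)
    show "finite {hamming x y |x y. x \<in> C \<and> y \<in> C \<and> x \<noteq> y}" using finC by (rule fin_dist)
    define w0 where "w0 = wd m (\<lambda>k. 1 * H 0 (c k))"
    define w1 where "w1 = wd m (\<lambda>k. (-1) * H 0 (c k))"
    have "w0 \<in> C" "w1 \<in> C" unfolding Ceq w0_def w1_def using N0 by blast+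
    moreover have "w0 \<noteq> w1"
    proof
      assume e: "w0 = w1"
      have "(\<Sum>k<m. H 0 (c k) * H 0 (c k)) = (\<Sum>k<m. 1)"
        apply (rule sum.cong[OF refl]) using pm[OF N0] by fastforce
      hence "2 * int (hamming w0 w1) = 2 * int m"
        using hamC[OF N0 N0, of 1 "-1"] unfolding w0_def w1_def by simp
      thus False using e m0 ham_self by simp
    qed
    ultimately show "{hamming x y |x y. x \<in> C \<and> y \<in> C \<and> x \<noteq> y} \<noteq> {}" by blast
    show "\<forall>a\<in>{hamming x y |x y. x \<in> C \<and> y \<in> C \<and> x \<noteq> y}. hamming v w < a"
      using lb hvw by fastforce
  qed
  finally show "min_dist (insert v (code_of N m H c)) < min_dist (code_of N m H c)"
    unfolding C_def .
qed

theorem theorem3: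
  fixes t i :: nat and H :: "nat \<Rightarrow> nat \<Rightarrow> int" and c :: "nat \<Rightarrow> nat"
  assumes "t \<ge> 1" and "i < t" and "int t > 16 * int i ^ 2 - int i"
    and "hadamard (4*t + 4*i) H"
    and "strict_mono_on {..<4*t} c" and "\<forall>k<4*t. c k < 4*t + 4*i"
  shows "\<forall>v \<in> binwords (4*t) - code_of (4*t + 4*i) (4*t) H c.
           min_dist (insert v (code_of (4*t + 4*i) (4*t) H c))
             < min_dist (code_of (4*t + 4*i) (4*t) H c)"
proof (rule main[OF assms(4)])
  show "inj_on c {..<4*t}" using assms(5) strict_mono_on_imp_inj_on by blast
  show "\<forall>k<4*t. c k < 4*t + 4*i" by (rule assms(6))
  show "4*t \<le> 4*t + 4*i" by simp
  have "int i \<le> int i ^ 2" by (cases i) (auto simp: power2_eq_square)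
  hence "4 * int i ^ 2 < int t" using assms(3) by linarith
  hence "int (16 * i^2) < int (4*t)" by simp
  hence "16 * i^2 < 4*t" by linarith
  thus "(4*t + 4*i - 4*t)^2 < 4*t" by (simp add: power_mult_distrib)
qed

end
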